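(* Let $V$ be a finite-dimensional vector space over $k$ with basis $\xi_1,\dots,\xi_n$, and let $W(V)$ be the Lie algebra of $k$-linear derivations of $k[\xi_1,\dots,\xi_n]=\mathrm{Sym}(V)$, with elements $f\partial_i$ and bracket $[f\partial_i,g\partial_j]=f\frac{\partial g}{\partial\xi_i}\partial_j-g\frac{\partial f}{\partial\xi_j}\partial_i$. Let $M$ be a vector space, $\mu:W(V)\otimes M\to M$ linear, and let $a:\mathrm{Sym}(V)\otimes M\to V\otimes M$ correspond to $\mu$ via $a(f\otimes x)=\sum_{i=1}^n\xi_i\otimes\mu(f\partial_i\otimes x)$. Then $\mu$ defines a representation of the Lie algebra $W(V)$ on $M$ if and only if $[a_1,a_2]=a'-a''$ as maps $\mathrm{Sym}(V)\otimes\mathrm{Sym}(V)\otimes M\to V\otimes V\otimes M$.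
   Context: Notation: $\tau$ denotes the symmetry swapping the first two tensor factors (of whatever type). $a_2=\mathrm{id}_{\mathrm{Sym}V}\otimes a$ and $a_1=\tau(\mathrm{id}\otimes a)\tau$, so that $a_1a_2$ and $a_2a_1$ are both maps $\mathrm{Sym}V\otimes\mathrm{Sym}V\otimes M\to V\otimes V\otimes M$, and $[a_1,a_2]=a_1a_2-a_2a_1$. $\Delta:\mathrm{Sym}V\to V\otimes\mathrm{Sym}V$ is $f\mapsto\sum_i\xi_i\otimes\partial f/\partial\xi_i$ and $m:\mathrm{Sym}V\otimes\mathrm{Sym}V\to\mathrm{Sym}V$ is multiplication. $a'$ is the composite $\mathrm{Sym}V\otimes\mathrm{Sym}V\otimes M\xrightarrow{\mathrm{id}\otimes\Delta\otimes\mathrm{id}}\mathrm{Sym}V\otimes V\otimes\mathrm{Sym}V\otimes M\xrightarrow{\tau\otimes\mathrm{id}\otimes\mathrm{id}}V\otimes\mathrm{Sym}V\otimes\mathrm{Sym}V\otimes M\xrightarrow{\mathrm{id}\otimes m\otimes\mathrm{id}}V\otimes\mathrm{Sym}V\otimes M\xrightarrow{\mathrm{id}\otimes a}V\otimes V\otimes M$, and $a''=\tau a'\tau$. A representation means $\mu([X,Y]\otimes x)=\mu(X\otimes\mu(Y\otimes x))-\mu(Y\otimes\mu(X\otimes x))$. *)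

theory Defs
  imports Main HOL.Vector_Spaces "HOL-Library.Poly_Mapping" "HOL-Library.Function_Algebras"
begin

(* V = k^'n with basis xi_i (i :: 'n, 'n a finite index type).
   Sym(V) = k[xi_i] : finitely supported coefficient functions on monomials. *)
type_synonym 'n mon = "'n \<Rightarrow>\<^sub>0 nat"
type_synonym ('n,'k) sym = "'n mon \<Rightarrow>\<^sub>0 'k"

definition monom :: "'n mon \<Rightarrow> ('n,'k::comm_ring_1) sym" where
  "monom m = Poly_Mapping.single m 1"

definition pd :: "'n \<Rightarrow> ('n,'k::comm_ring_1) sym \<Rightarrow> ('n,'k) sym" where
  "pd i p = Abs_poly_mapping (\<lambda>q::'n mon. of_nat (Poly_Mapping.lookup q i + 1) * Poly_Mapping.lookup p (q + Poly_Mapping.single i (1::nat)))"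

definition kscale :: "'k::comm_ring_1 \<Rightarrow> ('n,'k) sym \<Rightarrow> ('n,'k) sym" where
  "kscale c p = Poly_Mapping.map (\<lambda>a. c * a) p"

(* W(V): elements sum_i X_i d_i, represented by the coefficient family X *)
definition vf :: "('n,'k::comm_ring_1) sym \<Rightarrow> 'n \<Rightarrow> ('n \<Rightarrow> ('n,'k) sym)" where
  "vf f i = (\<lambda>j. if j = i then f else 0)"

definition genbr :: "('n,'k::comm_ring_1) sym \<Rightarrow> 'n \<Rightarrow> ('n,'k) sym \<Rightarrow> 'n \<Rightarrow> ('n \<Rightarrow> ('n,'k) sym)" where
  "genbr f i g j = (\<lambda>l. (if l = j then f * pd i g else 0) - (if l = i then g * pd j f else 0))"

definition wbracket :: "('n::finite \<Rightarrow> ('n,'k::comm_ring_1) sym) \<Rightarrow> ('n \<Rightarrow> ('n,'k) sym) \<Rightarrow> ('n \<Rightarrow> ('n,'k) sym)" where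
  "wbracket X Y = (\<lambda>l. \<Sum>i\<in>UNIV. \<Sum>j\<in>UNIV. genbr (X i) i (Y j) j l)"

(* mu : W(V) (x) M -> M linear  <->  mu bilinear as a map W(V) x M -> M *)
definition bilinear_mu :: "('k::field \<Rightarrow> 'm::ab_group_add \<Rightarrow> 'm) \<Rightarrow> (('n \<Rightarrow> ('n,'k) sym) \<Rightarrow> 'm \<Rightarrow> 'm) \<Rightarrow> bool" where
  "bilinear_mu smul mu \<longleftrightarrow>
     (\<forall>X Y x. mu (\<lambda>j. X j + Y j) x = mu X x + mu Y x) \<and>
     (\<forall>c X x. mu (\<lambda>j. kscale c (X j)) x = smul c (mu X x)) \<and>
     (\<forall>X x y. mu X (x + y) = mu X x + mu X y) \<and>
     (\<forall>c X x. mu X (smul c x) = smul c (mu X x))"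

definition is_representation :: "(('n::finite \<Rightarrow> ('n,'k::field) sym) \<Rightarrow> 'm::ab_group_add \<Rightarrow> 'm) \<Rightarrow> bool" where
  "is_representation mu \<longleftrightarrow>
     (\<forall>X Y x. mu (wbracket X Y) x = mu X (mu Y x) - mu Y (mu X x))"

(* Tensor products, via the monomial basis of Sym(V) and the basis xi_i of V:
     Sym(V) (x) N  =  'n mon \<Rightarrow>\<^sub>0 N      (sum_m xi^m (x) T_m)
     V (x) N       =  'n \<Rightarrow> N             (sum_i xi_i (x) U_i)       *)

definition tens :: "('k::comm_ring_1 \<Rightarrow> 'b::zero \<Rightarrow> 'b) \<Rightarrow> ('n,'k) sym \<Rightarrow> 'b \<Rightarrow> ('n mon \<Rightarrow>\<^sub>0 'b)" where
  "tens s f x = Poly_Mapping.map (\<lambda>c. s c x) f"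

definition vtens :: "'n \<Rightarrow> 'b::zero \<Rightarrow> ('n \<Rightarrow> 'b)" where
  "vtens i y = (\<lambda>j. if j = i then y else 0)"

definition amap :: "(('n::finite \<Rightarrow> ('n,'k::comm_ring_1) sym) \<Rightarrow> 'm::comm_monoid_add \<Rightarrow> 'm) \<Rightarrow> ('n mon \<Rightarrow>\<^sub>0 'm) \<Rightarrow> ('n \<Rightarrow> 'm)" where
  "amap mu T = (\<Sum>m\<in>Poly_Mapping.keys T. \<Sum>i\<in>UNIV. vtens i (mu (vf (monom m) i) (Poly_Mapping.lookup T m)))"

definition tauSV :: "('n mon \<Rightarrow>\<^sub>0 ('v \<Rightarrow> 'b::zero)) \<Rightarrow> ('v \<Rightarrow> ('n mon \<Rightarrow>\<^sub>0 'b))" where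
  "tauSV U = (\<lambda>i. Poly_Mapping.map (\<lambda>v. v i) U)"

definition tauSS :: "('n mon \<Rightarrow>\<^sub>0 ('n mon \<Rightarrow>\<^sub>0 'm::comm_monoid_add)) \<Rightarrow> ('n mon \<Rightarrow>\<^sub>0 ('n mon \<Rightarrow>\<^sub>0 'm))" where
  "tauSS T = (\<Sum>m1\<in>Poly_Mapping.keys T. \<Sum>m2\<in>Poly_Mapping.keys (Poly_Mapping.lookup T m1).
                 Poly_Mapping.single m2 (Poly_Mapping.single m1 (Poly_Mapping.lookup (Poly_Mapping.lookup T m1) m2)))"

definition tauVV :: "('n \<Rightarrow> 'n \<Rightarrow> 'm) \<Rightarrow> ('n \<Rightarrow> 'n \<Rightarrow> 'm)" where
  "tauVV U = (\<lambda>i j. U j i)"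

definition deltaM :: "('k::comm_ring_1 \<Rightarrow> 'm::comm_monoid_add \<Rightarrow> 'm) \<Rightarrow> ('n mon \<Rightarrow>\<^sub>0 'm) \<Rightarrow> ('n \<Rightarrow> ('n mon \<Rightarrow>\<^sub>0 'm))" where
  "deltaM smul T = (\<lambda>i. \<Sum>m\<in>Poly_Mapping.keys T. tens smul (pd i (monom m)) (Poly_Mapping.lookup T m))"

definition multM :: "('k::comm_ring_1 \<Rightarrow> 'm::comm_monoid_add \<Rightarrow> 'm) \<Rightarrow> ('n mon \<Rightarrow>\<^sub>0 ('n mon \<Rightarrow>\<^sub>0 'm)) \<Rightarrow> ('n mon \<Rightarrow>\<^sub>0 'm)" where
  "multM smul T = (\<Sum>m1\<in>Poly_Mapping.keys T. \<Sum>m2\<in>Poly_Mapping.keys (Poly_Mapping.lookup T m1).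
                     tens smul (monom m1 * monom m2) (Poly_Mapping.lookup (Poly_Mapping.lookup T m1) m2))"

(* a_2 = id_Sym (x) a : Sym (x) Sym (x) M -> Sym (x) V (x) M *)
definition a2_SS where "a2_SS mu T = Poly_Mapping.map (amap mu) T"
(* a_1 = tau (id_V (x) a) tau : Sym (x) V (x) M -> V (x) V (x) M *)
definition a1_SV where "a1_SV mu S = tauVV (\<lambda>i. amap mu (tauSV S i))"
(* a_1 = tau (id_Sym (x) a) tau : Sym (x) Sym (x) M -> V (x) Sym (x) M *)
definition a1_SS where "a1_SS mu T = tauSV (Poly_Mapping.map (amap mu) (tauSS T))"
(* a_2 = id_V (x) a : V (x) Sym (x) M -> V (x) V (x) M *)
definition a2_VS where "a2_VS mu W = (\<lambda>i. amap mu (W i))"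

definition comm_a where
  "comm_a mu T = (\<lambda>i j. a1_SV mu (a2_SS mu T) i j - a2_VS mu (a1_SS mu T) i j)"

(* a' = (id (x) a) o (id (x) m (x) id) o (tau (x) id (x) id) o (id (x) Delta (x) id) *)
definition a_prime where
  "a_prime smul mu T = (\<lambda>i. amap mu (multM smul (tauSV (Poly_Mapping.map (deltaM smul) T) i)))"

definition a_dprime where
  "a_dprime smul mu T = tauVV (a_prime smul mu (tauSS T))"

end

theory Submission
  imports Defs
begin

lemma lookup_map0: "g 0 = 0 \<Longrightarrow> Poly_Mapping.lookup (Poly_Mapping.map g f) k = g (Poly_Mapping.lookup f k)"
  by (simp add: Poly_Mapping.map.rep_eq when_def)

lemma keys_map_sub: "Poly_Mapping.keys (Poly_Mapping.map g f) \<subseteq> Poly_Mapping.keys f"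
  by (auto simp: in_keys_iff Poly_Mapping.map.rep_eq when_def)

lemma sum_singles: "(\<Sum>m\<in>Poly_Mapping.keys f. Poly_Mapping.single m (Poly_Mapping.lookup f m)) = f"
proof (rule poly_mapping_eqI)
  fix k
  show "Poly_Mapping.lookup (\<Sum>m\<in>Poly_Mapping.keys f. Poly_Mapping.single m (Poly_Mapping.lookup f m)) k = Poly_Mapping.lookup f k"
    by (simp add: lookup_sum lookup_single when_def in_keys_iff)
qed

lemma lookup_pd: "Poly_Mapping.lookup (pd i p) q = of_nat (Poly_Mapping.lookup q i + 1) * Poly_Mapping.lookup p (q + Poly_Mapping.single i 1)"
proof -
  have "{q. of_nat (Poly_Mapping.lookup q i + 1) * Poly_Mapping.lookup p (q + Poly_Mapping.single i 1) \<noteq> 0}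
     \<subseteq> (\<lambda>r. r - Poly_Mapping.single i 1) ` Poly_Mapping.keys p"
  proof (rule subsetI)
    fix q assume "q \<in> {q. of_nat (Poly_Mapping.lookup q i + 1) * Poly_Mapping.lookup p (q + Poly_Mapping.single i 1) \<noteq> 0}"
    then have "Poly_Mapping.lookup p (q + Poly_Mapping.single i 1) \<noteq> 0" by auto
    then show "q \<in> (\<lambda>r. r - Poly_Mapping.single i 1) ` Poly_Mapping.keys p"
      by (intro image_eqI[of _ _ "q + Poly_Mapping.single i 1"]) (simp_all add: in_keys_iff)
  qed
  then have "finite {q. of_nat (Poly_Mapping.lookup q i + 1) * Poly_Mapping.lookup p (q + Poly_Mapping.single i 1) \<noteq> 0}"
    by (rule finite_subset) simp
  then show ?thesis unfolding pd_def by simp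
qed

lemma pd_add: "pd i (p + q) = pd i p + pd i q"
  by (rule poly_mapping_eqI) (simp add: lookup_pd lookup_add distrib_left)
lemma pd_zero: "pd i 0 = 0"
  by (rule poly_mapping_eqI) (simp add: lookup_pd)
lemma lookup_kscale: "Poly_Mapping.lookup (kscale c p) q = c * Poly_Mapping.lookup p q"
  by (simp add: kscale_def lookup_map0)
lemma pd_kscale: "pd i (kscale c p) = kscale c (pd i p)"
  by (rule poly_mapping_eqI) (simp add: lookup_pd lookup_kscale mult.left_commute)
lemma kscale_mult: "kscale c p = Poly_Mapping.single 0 c * p"
  unfolding kscale_def by (rule mult_map_scale_conv_mult)
lemma kscale_zero[simp]: "kscale c 0 = 0"
  by (rule poly_mapping_eqI) (simp add: lookup_kscale)
lemma kscale_monom: "kscale c (monom m) = Poly_Mapping.single m c"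
  by (simp add: kscale_def monom_def)

lemma sum_sing: "sum g {x} = g x" by simp

lemma sum_fun_apply: "(sum f A) x = sum (\<lambda>a. f a x) A"
  by (induction A rule: infinite_finite_induct) auto

lemma sum_single_nz: "finite A \<Longrightarrow> i \<in> A \<Longrightarrow> (\<And>a. a \<in> A \<Longrightarrow> a \<noteq> i \<Longrightarrow> F a = 0) \<Longrightarrow> sum F A = F i"
  by (simp add: sum.remove)

lemma genbr_0l: "genbr 0 a g b = (\<lambda>l. 0)"
  unfolding genbr_def by (rule ext) (simp add: pd_zero)
lemma genbr_0r: "genbr f a 0 b = (\<lambda>l. 0)"
  unfolding genbr_def by (rule ext) (simp add: pd_zero)

lemma lookup_tauSS: "Poly_Mapping.lookup (Poly_Mapping.lookup (tauSS T) m') m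
    = Poly_Mapping.lookup (Poly_Mapping.lookup T m) m'"
proof -
  have "Poly_Mapping.lookup (Poly_Mapping.lookup (tauSS T) m') m
     = (\<Sum>m1\<in>Poly_Mapping.keys T. \<Sum>m2\<in>Poly_Mapping.keys (Poly_Mapping.lookup T m1).
          (if m2 = m' \<and> m1 = m then Poly_Mapping.lookup (Poly_Mapping.lookup T m1) m2 else 0))"
    unfolding tauSS_def lookup_sum by (rule sum.cong[OF refl], rule sum.cong[OF refl]) (auto simp: lookup_single when_def)
  also have "\<dots> = (\<Sum>m1\<in>Poly_Mapping.keys T. if m1 = m then Poly_Mapping.lookup (Poly_Mapping.lookup T m1) m' else 0)"
  proof (rule sum.cong[OF refl])
    fix m1 show "(\<Sum>m2\<in>Poly_Mapping.keys (Poly_Mapping.lookup T m1).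
          (if m2 = m' \<and> m1 = m then Poly_Mapping.lookup (Poly_Mapping.lookup T m1) m2 else 0))
        = (if m1 = m then Poly_Mapping.lookup (Poly_Mapping.lookup T m1) m' else 0)"
      by (cases "m1 = m") (auto simp: sum.delta' in_keys_iff)
  qed
  also have "\<dots> = Poly_Mapping.lookup (Poly_Mapping.lookup T m) m'"
    by (auto simp: sum.delta' in_keys_iff)
  finally show ?thesis .
qed

abbreviation LL where "LL T m m' \<equiv> Poly_Mapping.lookup (Poly_Mapping.lookup T m) m'"

definition supp2 where
  "supp2 A B T \<longleftrightarrow> finite A \<and> finite B \<and> Poly_Mapping.keys T \<subseteq> A \<and> (\<forall>m. Poly_Mapping.keys (Poly_Mapping.lookup T m) \<subseteq> B)"

lemma supp2_tauSS: "supp2 A B T \<Longrightarrow> supp2 B A (tauSS T)"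
  unfolding supp2_def
  by (auto simp: in_keys_iff lookup_tauSS) (metis in_keys_iff lookup_tauSS lookup_zero poly_mapping_eqI subsetD)+

lemma supp2_canon: "supp2 (Poly_Mapping.keys T) (\<Union>m\<in>Poly_Mapping.keys T. Poly_Mapping.keys (Poly_Mapping.lookup T m)) T"
  unfolding supp2_def by (auto simp: in_keys_iff) (metis in_keys_iff lookup_zero)


context
  fixes smul :: "'k::field \<Rightarrow> 'm::ab_group_add \<Rightarrow> 'm"
    and mu :: "('n::finite \<Rightarrow> ('n,'k) sym) \<Rightarrow> 'm \<Rightarrow> 'm"
  assumes VS: "Vector_Spaces.vector_space smul"
    and BM: "bilinear_mu smul mu"
begin

interpretation V: vector_space smul by (rule VS)

lemma mu_addX: "mu (\<lambda>j. X j + Y j) x = mu X x + mu Y x"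
  using BM by (simp add: bilinear_mu_def)
lemma mu_scX: "mu (\<lambda>j. kscale c (X j)) x = smul c (mu X x)"
  using BM by (simp add: bilinear_mu_def)
lemma mu_addx: "mu X (x + y) = mu X x + mu X y"
  using BM by (simp add: bilinear_mu_def)
lemma mu_scx: "mu X (smul c x) = smul c (mu X x)"
  using BM by (simp add: bilinear_mu_def)
lemma mu_zerox[simp]: "mu X 0 = 0"
  using mu_addx[of X 0 0] by simp
lemma mu_zeroX: "mu (\<lambda>j. 0) x = 0"
  using mu_addX[of "\<lambda>j. 0" "\<lambda>j. 0" x] by simp
lemma mu_zeroX'[simp]: "mu 0 x = 0"
  using mu_zeroX by (simp add: zero_fun_def)
lemma mu_diffX: "mu (\<lambda>j. X j - Y j) x = mu X x - mu Y x"
  using mu_addX[of "\<lambda>j. X j - Y j" Y x] by (simp add: algebra_simps)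
lemma mu_sumx: "mu X (sum f A) = (\<Sum>a\<in>A. mu X (f a))"
  by (induction A rule: infinite_finite_induct) (auto simp: mu_addx)
lemma sm0[simp]: "smul 0 x = 0"
  using VS by (simp add: V.scale_zero_left)
lemma sm0'[simp]: "smul c 0 = 0"
  using VS by (simp add: V.scale_zero_right)
lemma sm_diff: "smul c (x - y) = smul c x - smul c y"
  using VS by (simp add: V.scale_right_diff_distrib)
lemma sm_add: "smul c (x + y) = smul c x + smul c y"
  using VS by (simp add: V.scale_right_distrib)
lemma sm_sum: "smul c (sum f A) = (\<Sum>a\<in>A. smul c (f a))"
  by (induction A rule: infinite_finite_induct) (auto simp: sm_add)

definition bil :: "(('n,'k) sym \<Rightarrow> 'm \<Rightarrow> 'm) \<Rightarrow> bool" where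
  "bil F \<longleftrightarrow> (\<forall>f g x. F (f+g) x = F f x + F g x) \<and> (\<forall>c f x. F (kscale c f) x = smul c (F f x))
     \<and> (\<forall>f x y. F f (x+y) = F f x + F f y) \<and> (\<forall>c f x. F f (smul c x) = smul c (F f x))"

definition Psi :: "(('n,'k) sym \<Rightarrow> 'm \<Rightarrow> 'm) \<Rightarrow> ('n mon \<Rightarrow>\<^sub>0 'm) \<Rightarrow> 'm" where
  "Psi F V = (\<Sum>p\<in>Poly_Mapping.keys V. F (monom p) (Poly_Mapping.lookup V p))"

lemma bil_f0: "bil F \<Longrightarrow> F f 0 = 0"
  unfolding bil_def by (metis add_cancel_right_right add_0)
lemma bil_0x: "bil F \<Longrightarrow> F 0 x = 0"
  unfolding bil_def by (metis add_cancel_right_right add_0)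
lemma bil_sumf: "bil F \<Longrightarrow> F (sum f A) x = (\<Sum>a\<in>A. F (f a) x)"
  by (induction A rule: infinite_finite_induct) (auto simp: bil_0x, auto simp: bil_def)

lemma Psi_super: assumes "bil F" "finite A" "Poly_Mapping.keys V \<subseteq> A"
  shows "Psi F V = (\<Sum>p\<in>A. F (monom p) (Poly_Mapping.lookup V p))"
  unfolding Psi_def
  by (rule sum.mono_neutral_left) (use assms in \<open>auto simp: in_keys_iff bil_f0\<close>)

lemma Psi_zero[simp]: "Psi F 0 = 0"
  by (simp add: Psi_def)

lemma Psi_add: assumes "bil F" shows "Psi F (V + W) = Psi F V + Psi F W"
proof -
  have "Psi F (V + W) = (\<Sum>p\<in>Poly_Mapping.keys V \<union> Poly_Mapping.keys W. F (monom p) (Poly_Mapping.lookup (V+W) p))"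
    by (rule Psi_super[OF assms]) (auto simp: keys_add)
  also have "\<dots> = (\<Sum>p\<in>Poly_Mapping.keys V \<union> Poly_Mapping.keys W. F (monom p) (Poly_Mapping.lookup V p))
     + (\<Sum>p\<in>Poly_Mapping.keys V \<union> Poly_Mapping.keys W. F (monom p) (Poly_Mapping.lookup W p))"
    using assms by (simp add: lookup_add bil_def sum.distrib)
  also have "\<dots> = Psi F V + Psi F W"
    by (simp add: Psi_super[OF assms, of "Poly_Mapping.keys V \<union> Poly_Mapping.keys W" V]
         Psi_super[OF assms, of "Poly_Mapping.keys V \<union> Poly_Mapping.keys W" W])
  finally show ?thesis .
qed

lemma Psi_sum: assumes "bil F" shows "Psi F (sum V A) = (\<Sum>a\<in>A. Psi F (V a))"
  by (induction A rule: infinite_finite_induct) (auto simp: Psi_add[OF assms])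

lemma lookup_tens: "Poly_Mapping.lookup (tens smul g x) p = smul (Poly_Mapping.lookup g p) x"
  by (simp add: tens_def lookup_map0)

lemma keys_tens: "Poly_Mapping.keys (tens smul g x) \<subseteq> Poly_Mapping.keys g"
  unfolding tens_def by (rule keys_map_sub)

lemma Psi_tens: assumes "bil F" shows "Psi F (tens smul g x) = F g x"
proof -
  have "Psi F (tens smul g x) = (\<Sum>p\<in>Poly_Mapping.keys g. F (monom p) (smul (Poly_Mapping.lookup g p) x))"
    by (simp add: Psi_super[OF assms _ keys_tens] lookup_tens)
  also have "\<dots> = (\<Sum>p\<in>Poly_Mapping.keys g. F (Poly_Mapping.single p (Poly_Mapping.lookup g p)) x)"
    using assms by (simp add: bil_def kscale_monom[symmetric])
  also have "\<dots> = F g x"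
    by (simp add: bil_sumf[OF assms, symmetric] sum_singles)
  finally show ?thesis .
qed


lemma bil_vf: "bil (\<lambda>f. mu (vf f j))"
proof -
  have 1: "vf (f + g) j = (\<lambda>l. vf f j l + vf g j l)" for f g by (auto simp: vf_def)
  have 2: "vf (kscale c f) j = (\<lambda>l. kscale c (vf f j l))" for c f by (auto simp: vf_def)
  show ?thesis unfolding bil_def 1 2 by (simp add: mu_addX mu_scX mu_addx mu_scx)
qed

lemma bil_vf_mult: "bil (\<lambda>f. mu (vf (h * f) j))"
proof -
  have 1: "vf (h * (f + g)) j = (\<lambda>l. vf (h*f) j l + vf (h*g) j l)" for f g by (auto simp: vf_def distrib_left)
  have 2: "vf (h * kscale c f) j = (\<lambda>l. kscale c (vf (h*f) j l))" for c f
    by (auto simp: vf_def kscale_mult mult.left_commute)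
  show ?thesis unfolding bil_def 1 2 by (simp add: mu_addX mu_scX mu_addx mu_scx)
qed

lemma amap_Psi: "amap mu V j = Psi (\<lambda>f. mu (vf f j)) V"
  unfolding amap_def Psi_def sum_fun_apply vtens_def
  by (simp add: vf_def)

lemma lookup_tauSV: "Poly_Mapping.lookup (tauSV W i) m = Poly_Mapping.lookup W m i"
  by (simp add: tauSV_def lookup_map0)
lemma keys_tauSV: "Poly_Mapping.keys (tauSV W i) \<subseteq> Poly_Mapping.keys W"
  unfolding tauSV_def by (rule keys_map_sub)

lemma amap0[simp]: "amap mu 0 = 0"
  by (simp add: amap_def zero_fun_def)


lemma amap_super: "finite A \<Longrightarrow> Poly_Mapping.keys V \<subseteq> A \<Longrightarrow>
   amap mu V j = (\<Sum>p\<in>A. mu (vf (monom p) j) (Poly_Mapping.lookup V p))"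
  by (simp add: amap_Psi Psi_super[OF bil_vf])

lemma F1: assumes "supp2 A B T"
  shows "comm_a mu T i j = (\<Sum>m\<in>A. \<Sum>m'\<in>B.
     mu (vf (monom m) i) (mu (vf (monom m') j) (LL T m m')) - mu (vf (monom m') j) (mu (vf (monom m) i) (LL T m m')))"
proof -
  have fA: "finite A" and fB: "finite B" and kA: "Poly_Mapping.keys T \<subseteq> A"
    and kB: "\<And>m. Poly_Mapping.keys (Poly_Mapping.lookup T m) \<subseteq> B"
    using assms by (auto simp: supp2_def)
  define S where "S = a2_SS mu T"
  have kS: "Poly_Mapping.keys (tauSV S j) \<subseteq> A"
    using keys_tauSV[of S j] keys_map_sub[of "amap mu" T] kA by (auto simp: S_def a2_SS_def)
  have lS: "Poly_Mapping.lookup (tauSV S j) m = (\<Sum>m'\<in>B. mu (vf (monom m') j) (LL T m m'))" for m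
    by (simp add: lookup_tauSV S_def a2_SS_def lookup_map0 amap_super[OF fB kB])
  have 1: "a1_SV mu (a2_SS mu T) i j = (\<Sum>m\<in>A. \<Sum>m'\<in>B. mu (vf (monom m) i) (mu (vf (monom m') j) (LL T m m')))"
    unfolding a1_SV_def tauVV_def S_def[symmetric] amap_super[OF fA kS] lS mu_sumx ..
  define R where "R = Poly_Mapping.map (amap mu) (tauSS T)"
  have st: "supp2 B A (tauSS T)" by (rule supp2_tauSS[OF assms])
  then have kR: "Poly_Mapping.keys (tauSV R i) \<subseteq> B"
    using keys_tauSV[of R i] keys_map_sub[of "amap mu" "tauSS T"] by (auto simp: R_def supp2_def)
  have lR: "Poly_Mapping.lookup (tauSV R i) m' = (\<Sum>m\<in>A. mu (vf (monom m) i) (LL T m m'))" for m'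
    using st by (simp add: lookup_tauSV R_def lookup_map0 amap_super[OF fA] supp2_def lookup_tauSS)
  have 2: "a2_VS mu (a1_SS mu T) i j = (\<Sum>m\<in>A. \<Sum>m'\<in>B. mu (vf (monom m') j) (mu (vf (monom m) i) (LL T m m')))"
    unfolding a2_VS_def a1_SS_def R_def[symmetric] amap_super[OF fB kR] lR mu_sumx
    by (rule sum.swap)
  show ?thesis unfolding comm_a_def 1 2 by (simp only: sum_subtractf)
qed

lemma F2: assumes "supp2 A B T"
  shows "a_prime smul mu T i j = (\<Sum>m\<in>A. \<Sum>m'\<in>B. mu (vf (monom m * pd i (monom m')) j) (LL T m m'))"
proof -
  have fA: "finite A" and fB: "finite B" and kA: "Poly_Mapping.keys T \<subseteq> A"
    and kB: "\<And>m. Poly_Mapping.keys (Poly_Mapping.lookup T m) \<subseteq> B"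
    using assms by (auto simp: supp2_def)
  define U where "U = tauSV (Poly_Mapping.map (deltaM smul) T) i"
  have dM0: "deltaM smul 0 = 0" by (simp add: deltaM_def zero_fun_def)
  have lU: "Poly_Mapping.lookup U m = (\<Sum>m'\<in>Poly_Mapping.keys (Poly_Mapping.lookup T m). tens smul (pd i (monom m')) (LL T m m'))" for m
    unfolding U_def lookup_tauSV lookup_map0[of "deltaM smul", OF dM0] by (simp add: deltaM_def)
  have kU: "Poly_Mapping.keys U \<subseteq> A"
    using keys_tauSV[of "Poly_Mapping.map (deltaM smul) T" i] keys_map_sub[of "deltaM smul" T] kA by (auto simp: U_def)
  have "a_prime smul mu T i j = Psi (\<lambda>f. mu (vf f j)) (multM smul U)"
    by (simp add: a_prime_def U_def amap_Psi)
  also have "\<dots> = (\<Sum>m\<in>Poly_Mapping.keys U. \<Sum>p\<in>Poly_Mapping.keys (Poly_Mapping.lookup U m).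
       mu (vf (monom m * monom p) j) (Poly_Mapping.lookup (Poly_Mapping.lookup U m) p))"
    by (simp add: multM_def Psi_sum[OF bil_vf] Psi_tens[OF bil_vf])
  also have "\<dots> = (\<Sum>m\<in>Poly_Mapping.keys U. Psi (\<lambda>f. mu (vf (monom m * f) j)) (Poly_Mapping.lookup U m))"
    by (simp add: Psi_def)
  also have "\<dots> = (\<Sum>m\<in>A. Psi (\<lambda>f. mu (vf (monom m * f) j)) (Poly_Mapping.lookup U m))"
    by (rule sum.mono_neutral_left) (use fA kU in \<open>auto simp: in_keys_iff\<close>)
  also have "\<dots> = (\<Sum>m\<in>A. \<Sum>m'\<in>B. mu (vf (monom m * pd i (monom m')) j) (LL T m m'))"
  proof (rule sum.cong[OF refl])
    fix m
    have "Psi (\<lambda>f. mu (vf (monom m * f) j)) (Poly_Mapping.lookup U m)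
       = (\<Sum>m'\<in>Poly_Mapping.keys (Poly_Mapping.lookup T m). mu (vf (monom m * pd i (monom m')) j) (LL T m m'))"
      by (simp add: lU Psi_sum[OF bil_vf_mult] Psi_tens[OF bil_vf_mult])
    also have "\<dots> = (\<Sum>m'\<in>B. mu (vf (monom m * pd i (monom m')) j) (LL T m m'))"
      by (rule sum.mono_neutral_left) (use fB kB in \<open>auto simp: in_keys_iff\<close>)
    finally show "Psi (\<lambda>f. mu (vf (monom m * f) j)) (Poly_Mapping.lookup U m)
       = (\<Sum>m'\<in>B. mu (vf (monom m * pd i (monom m')) j) (LL T m m'))" .
  qed
  finally show ?thesis .
qed

lemma F3: assumes "supp2 A B T"
  shows "a_dprime smul mu T i j = (\<Sum>m\<in>A. \<Sum>m'\<in>B. mu (vf (monom m' * pd j (monom m)) i) (LL T m m'))"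
proof -
  have "a_dprime smul mu T i j = (\<Sum>m'\<in>B. \<Sum>m\<in>A. mu (vf (monom m' * pd j (monom m)) i) (LL T m m'))"
    unfolding a_dprime_def tauVV_def F2[OF supp2_tauSS[OF assms]] lookup_tauSS ..
  also have "\<dots> = (\<Sum>m\<in>A. \<Sum>m'\<in>B. mu (vf (monom m' * pd j (monom m)) i) (LL T m m'))"
    by (rule sum.swap)
  finally show ?thesis .
qed

lemma wbracket_vf: "wbracket (vf f i) (vf g j) = genbr f i g j"
proof (rule ext)
  fix l
  have "wbracket (vf f i) (vf g j) l = (\<Sum>b\<in>UNIV. genbr (vf f i i) i (vf g j b) b l)"
    unfolding wbracket_def
    by (rule sum_single_nz) (auto simp: vf_def genbr_0l)
  also have "\<dots> = genbr (vf f i i) i (vf g j j) j l"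
    by (rule sum_single_nz) (auto simp: vf_def genbr_0r)
  finally show "wbracket (vf f i) (vf g j) l = genbr f i g j l" by (simp add: vf_def)
qed

lemma BR: "mu (wbracket (vf f i) (vf g j)) y = mu (vf (f * pd i g) j) y - mu (vf (g * pd j f) i) y"
proof -
  have "genbr f i g j = (\<lambda>l. vf (f * pd i g) j l - vf (g * pd j f) i l)"
    by (auto simp: genbr_def vf_def)
  then show ?thesis by (simp add: wbracket_vf mu_diffX)
qed

lemma fwd: assumes "is_representation mu"
  shows "comm_a mu T = (\<lambda>i j. a_prime smul mu T i j - a_dprime smul mu T i j)"
proof (intro ext)
  fix i j
  note sc = supp2_canon[of T]
  have key: "mu (vf (monom m) i) (mu (vf (monom m') j) y) - mu (vf (monom m') j) (mu (vf (monom m) i) y)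
     = mu (vf (monom m * pd i (monom m')) j) y - mu (vf (monom m' * pd j (monom m)) i) y" for m m' y
    using assms BR[of "monom m" i "monom m'" j y] unfolding is_representation_def by metis
  show "comm_a mu T i j = a_prime smul mu T i j - a_dprime smul mu T i j"
    unfolding F1[OF sc] F2[OF sc] F3[OF sc] sum_subtractf[symmetric] key ..
qed

lemma basis: assumes "\<forall>T :: 'n mon \<Rightarrow>\<^sub>0 ('n mon \<Rightarrow>\<^sub>0 'm).
       comm_a mu T = (\<lambda>i j. a_prime smul mu T i j - a_dprime smul mu T i j)"
  shows "mu (wbracket (vf (monom m) i) (vf (monom m') j)) y
     = mu (vf (monom m) i) (mu (vf (monom m') j) y) - mu (vf (monom m') j) (mu (vf (monom m) i) y)"
proof -
  define T0 :: "'n mon \<Rightarrow>\<^sub>0 ('n mon \<Rightarrow>\<^sub>0 'm)" where "T0 = Poly_Mapping.single m (Poly_Mapping.single m' y)"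
  have sc: "supp2 {m} {m'} T0"
    by (auto simp: supp2_def T0_def lookup_single when_def)
  have L: "LL T0 m m' = y" by (simp add: T0_def)
  from assms have e: "comm_a mu T0 = (\<lambda>i j. a_prime smul mu T0 i j - a_dprime smul mu T0 i j)" by blast
  have "comm_a mu T0 i j = a_prime smul mu T0 i j - a_dprime smul mu T0 i j"
    using fun_cong[OF fun_cong[OF e, of i], of j] by (simp only:)
  then have "mu (vf (monom m) i) (mu (vf (monom m') j) y) - mu (vf (monom m') j) (mu (vf (monom m) i) y)
     = mu (vf (monom m * pd i (monom m')) j) y - mu (vf (monom m' * pd j (monom m)) i) y"
    unfolding F1[OF sc] F2[OF sc] F3[OF sc] L sum_sing .
  then show ?thesis unfolding BR by (rule sym)
qed


lemma wbr_addL: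
  fixes X X' Y Y' :: "'n \<Rightarrow> ('n,'k) sym"
  shows "wbracket (\<lambda>l. X l + X' l) Y = (\<lambda>l. wbracket X Y l + wbracket X' Y l)"
proof -
  have "genbr (f + f') a g b l = genbr f a g b l + genbr f' a g b l" for f f' g :: "('n,'k) sym" and a b :: 'n and l
    by (auto simp: genbr_def pd_add algebra_simps)
  then show ?thesis unfolding wbracket_def by (simp add: sum.distrib)
qed

lemma wbr_addR:
  fixes X X' Y Y' :: "'n \<Rightarrow> ('n,'k) sym"
  shows "wbracket X (\<lambda>l. Y l + Y' l) = (\<lambda>l. wbracket X Y l + wbracket X Y' l)"
proof -
  have "genbr f a (g + g') b l = genbr f a g b l + genbr f a g' b l" for f g g' :: "('n,'k) sym" and a b :: 'n and l
    by (auto simp: genbr_def pd_add algebra_simps)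
  then show ?thesis unfolding wbracket_def by (simp add: sum.distrib)
qed

lemma pd_smul: "pd i (Poly_Mapping.single 0 c * p) = Poly_Mapping.single 0 c * pd i p"
  using pd_kscale[of i c p] by (simp add: kscale_mult)

lemma pd_smul': "pd i (p * Poly_Mapping.single 0 c) = pd i p * Poly_Mapping.single 0 c"
  using pd_smul[of i c p] by (simp add: mult.commute)

lemma wbr_scL:
  fixes X X' Y Y' :: "'n \<Rightarrow> ('n,'k) sym"
  shows "wbracket (\<lambda>l. kscale c (X l)) Y = (\<lambda>l. kscale c (wbracket X Y l))"
proof -
  have "genbr (Poly_Mapping.single 0 c * f) a g b l = Poly_Mapping.single 0 c * genbr f a g b l" for f g :: "('n,'k) sym" and a b :: 'n and l and c :: 'k
    by (auto simp: genbr_def pd_smul pd_smul' algebra_simps)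
  then show ?thesis unfolding wbracket_def kscale_mult by (simp add: sum_distrib_left)
qed

lemma wbr_scR:
  fixes X X' Y Y' :: "'n \<Rightarrow> ('n,'k) sym"
  shows "wbracket X (\<lambda>l. kscale c (Y l)) = (\<lambda>l. kscale c (wbracket X Y l))"
proof -
  have "genbr f a (Poly_Mapping.single 0 c * g) b l = Poly_Mapping.single 0 c * genbr f a g b l" for f g :: "('n,'k) sym" and a b :: 'n and l and c :: 'k
    by (auto simp: genbr_def pd_smul pd_smul' algebra_simps)
  then show ?thesis unfolding wbracket_def kscale_mult by (simp add: sum_distrib_left)
qed

definition DD where "DD X Y x = mu (wbracket X Y) x - (mu X (mu Y x) - mu Y (mu X x))"

lemma DD_addL: "DD (\<lambda>l. X l + X' l) Y x = DD X Y x + DD X' Y x"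
  unfolding DD_def wbr_addL mu_addX mu_addx by (simp add: algebra_simps)
lemma DD_addR: "DD X (\<lambda>l. Y l + Y' l) x = DD X Y x + DD X Y' x"
  unfolding DD_def wbr_addR mu_addX mu_addx by (simp add: algebra_simps)
lemma DD_scL: "DD (\<lambda>l. kscale c (X l)) Y x = smul c (DD X Y x)"
  unfolding DD_def wbr_scL mu_scX mu_scx sm_diff ..
lemma DD_scR: "DD X (\<lambda>l. kscale c (Y l)) x = smul c (DD X Y x)"
  unfolding DD_def wbr_scR mu_scX mu_scx sm_diff ..

lemma ext0:
  fixes Phi :: "('n \<Rightarrow> ('n,'k) sym) \<Rightarrow> 'm"
  assumes add: "\<And>X X'. Phi (\<lambda>l. X l + X' l) = Phi X + Phi X'"
    and sc: "\<And>c X. Phi (\<lambda>l. kscale c (X l)) = smul c (Phi X)"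
    and b: "\<And>m i. Phi (vf (monom m) i) = 0"
  shows "Phi X = 0"
proof -
  have z: "Phi (\<lambda>l. 0) = 0" using add[of "\<lambda>l. 0" "\<lambda>l. 0"] by simp
  have s: "Phi (\<lambda>l. \<Sum>a\<in>A. Z a l) = (\<Sum>a\<in>A. Phi (Z a))" for A :: "'a set" and Z
    by (induction A rule: infinite_finite_induct) (simp_all add: z add)
  have v: "Phi (vf f i) = 0" for f i
  proof -
    have "vf f i = (\<lambda>l. \<Sum>m\<in>Poly_Mapping.keys f. kscale (Poly_Mapping.lookup f m) (vf (monom m) i l))"
      by (auto simp: vf_def kscale_monom sum_singles)
    then show ?thesis by (simp add: s sc b)
  qed
  have "X = (\<lambda>l. \<Sum>i\<in>UNIV. vf (X i) i l)" by (auto simp: vf_def)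
  then have "Phi X = Phi (\<lambda>l. \<Sum>i\<in>UNIV. vf (X i) i l)" by simp
  also have "\<dots> = 0" by (simp add: s v)
  finally show ?thesis .
qed

lemma bwd: assumes "\<forall>T :: 'n mon \<Rightarrow>\<^sub>0 ('n mon \<Rightarrow>\<^sub>0 'm).
       comm_a mu T = (\<lambda>i j. a_prime smul mu T i j - a_dprime smul mu T i j)"
  shows "is_representation mu"
  unfolding is_representation_def
proof (intro allI)
  fix X Y x
  have 1: "DD (vf (monom m) i) Y' x = 0" for m i Y'
    by (rule ext0[of "\<lambda>Y. DD (vf (monom m) i) Y x"]) (simp_all add: DD_addR DD_scR DD_def basis[OF assms])
  have "DD X Y x = 0"
    by (rule ext0[of "\<lambda>X. DD X Y x"]) (simp_all add: DD_addL DD_scL 1)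
  then show "mu (wbracket X Y) x = mu X (mu Y x) - mu Y (mu X x)"
    unfolding DD_def by simp
qed

end

theorem proposition6p2:
  fixes smul :: "'k::field \<Rightarrow> 'm::ab_group_add \<Rightarrow> 'm"
    and mu :: "('n::finite \<Rightarrow> ('n,'k) sym) \<Rightarrow> 'm \<Rightarrow> 'm"
  assumes "Vector_Spaces.vector_space smul"
    and "bilinear_mu smul mu"
  shows "is_representation mu \<longleftrightarrow>
    (\<forall>T :: 'n mon \<Rightarrow>\<^sub>0 ('n mon \<Rightarrow>\<^sub>0 'm).
       comm_a mu T = (\<lambda>i j. a_prime smul mu T i j - a_dprime smul mu T i j))"
  using fwd[OF assms] bwd[OF assms] by blast

end
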